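(* Let $C$ be a linear $[n,k,2]_q$ completely regular code with covering radius $\rho=1$, and let $n_a$ be the number of codewords at distance one from any vector not in $C$. Let $A$ be a generator matrix of the repetition $[n_a,1,n_a]_q$ code. (i) If $k=n-1$, then $C$ is linearly equivalent to the code with parity-check matrix $H=A$. (ii) If $k<n-1$, then $C$ is linearly equivalent to the code with parity-check matrix $H=A\otimes B$, where $B$ is a parity-check matrix of a $q$-ary Hamming code of length $n_b=n/n_a$ (in particular such a Hamming code exists).
   Context: $\mathbb{F}_q$ is the finite field with $q$ elements; Hamming distance; covering radius $\rho=\max_{\bf v}\min_{{\bf x}\in C}d({\bf v},{\bf x})$. $C$ is completely regular if for every vector ${\bf x}$, with $t=d({\bf x},C)$, the number of codewords at distance $i$ from ${\bf x}$ depends only on $t$ and $i$ (so $n_a$ is well defined). The repetition $[n,1,n]_q$ code is $\{(c,\dots,c)\}$. For $m\ge 2$ a $q$-ary Hamming code of length $(q^m-1)/(q-1)$ is a linear code with an $m\times (q^m-1)/(q-1)$ parity-check matrix whose columns are nonzero and pairwise linearly independent. Two codes are linearly equivalent if one is the image of the other under ${\bf x}\mapsto{\bf x}M$ for a monomial matrix $M$. $A\otimes B$ denotes the Kronecker product (each entry $a_{r,s}$ of $A$ replaced by the block $a_{r,s}B$). *)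

theory Defs
  imports "HOL-Combinatorics.Permutations"
begin

text \<open>Vectors of length n over a finite field 'a are functions nat => 'a vanishing
  outside {0..<n}. Matrices are functions nat => nat => 'a (row, column), with their
  dimensions given explicitly.\<close>

definition vecs :: "nat \<Rightarrow> (nat \<Rightarrow> 'a::zero) set" where
  "vecs n = {x. \<forall>i\<ge>n. x i = 0}"

definition hdist :: "nat \<Rightarrow> (nat \<Rightarrow> 'a) \<Rightarrow> (nat \<Rightarrow> 'a) \<Rightarrow> nat" where
  "hdist n x y = card {i. i < n \<and> x i \<noteq> y i}"

definition linear_code :: "nat \<Rightarrow> (nat \<Rightarrow> 'a::field) set \<Rightarrow> bool" where
  "linear_code n C \<longleftrightarrow> C \<subseteq> vecs n \<and> (\<lambda>_. 0) \<in> C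
     \<and> (\<forall>x\<in>C. \<forall>y\<in>C. (\<lambda>i. x i + y i) \<in> C)
     \<and> (\<forall>a. \<forall>x\<in>C. (\<lambda>i. a * x i) \<in> C)"

definition code_dim :: "(nat \<Rightarrow> 'a::{field,finite}) set \<Rightarrow> nat \<Rightarrow> bool" where
  "code_dim C k \<longleftrightarrow> card C = card (UNIV :: 'a set) ^ k"

definition min_dist :: "nat \<Rightarrow> (nat \<Rightarrow> 'a) set \<Rightarrow> nat \<Rightarrow> bool" where
  "min_dist n C d \<longleftrightarrow> (\<exists>x\<in>C. \<exists>y\<in>C. x \<noteq> y \<and> hdist n x y = d)
     \<and> (\<forall>x\<in>C. \<forall>y\<in>C. x \<noteq> y \<longrightarrow> d \<le> hdist n x y)"

definition dist_to_code :: "nat \<Rightarrow> (nat \<Rightarrow> 'a) set \<Rightarrow> (nat \<Rightarrow> 'a) \<Rightarrow> nat" where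
  "dist_to_code n C v = Min ((\<lambda>c. hdist n v c) ` C)"

definition covering_radius :: "nat \<Rightarrow> (nat \<Rightarrow> 'a::zero) set \<Rightarrow> nat" where
  "covering_radius n C = Max ((\<lambda>v. dist_to_code n C v) ` vecs n)"

definition completely_regular :: "nat \<Rightarrow> (nat \<Rightarrow> 'a::zero) set \<Rightarrow> bool" where
  "completely_regular n C \<longleftrightarrow>
     (\<forall>x\<in>vecs n. \<forall>y\<in>vecs n. dist_to_code n C x = dist_to_code n C y \<longrightarrow>
        (\<forall>i. card {c\<in>C. hdist n x c = i} = card {c\<in>C. hdist n y c = i}))"

definition ker_code :: "nat \<Rightarrow> nat \<Rightarrow> (nat \<Rightarrow> nat \<Rightarrow> 'a::comm_ring) \<Rightarrow> (nat \<Rightarrow> 'a) set" where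
  "ker_code m n H = {x \<in> vecs n. \<forall>r<m. (\<Sum>j<n. H r j * x j) = 0}"

definition row_space :: "nat \<Rightarrow> nat \<Rightarrow> (nat \<Rightarrow> nat \<Rightarrow> 'a::comm_ring) \<Rightarrow> (nat \<Rightarrow> 'a) set" where
  "row_space k n G = {x. \<exists>u. x = (\<lambda>j. if j < n then (\<Sum>r<k. u r * G r j) else 0)}"

text \<open>G is a (k x n) generator matrix of the [n,k] code C: its rows span C and are
  linearly independent (equivalently, the row space has q^k elements).\<close>
definition generator_matrix ::
  "nat \<Rightarrow> nat \<Rightarrow> (nat \<Rightarrow> nat \<Rightarrow> 'a::{field,finite}) \<Rightarrow> (nat \<Rightarrow> 'a) set \<Rightarrow> bool" where
  "generator_matrix k n G C \<longleftrightarrow> row_space k n G = C \<and> card C = card (UNIV :: 'a set) ^ k"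

definition rep_code :: "nat \<Rightarrow> (nat \<Rightarrow> 'a::zero) set" where
  "rep_code n = {x \<in> vecs n. \<exists>c. \<forall>j<n. x j = c}"

definition hamming_length :: "nat \<Rightarrow> nat \<Rightarrow> nat" where
  "hamming_length q m = (q ^ m - 1) div (q - 1)"

definition hamming_pcm :: "nat \<Rightarrow> (nat \<Rightarrow> nat \<Rightarrow> 'a::{field,finite}) \<Rightarrow> bool" where
  "hamming_pcm m B \<longleftrightarrow> 2 \<le> m \<and>
     (\<forall>j < hamming_length (card (UNIV :: 'a set)) m. \<exists>i<m. B i j \<noteq> 0) \<and>
     (\<forall>j < hamming_length (card (UNIV :: 'a set)) m. \<forall>j' < hamming_length (card (UNIV :: 'a set)) m. j \<noteq> j' \<longrightarrow>
        \<not> (\<exists>a. \<forall>i<m. B i j' = a * B i j))"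

definition kron :: "nat \<Rightarrow> nat \<Rightarrow> (nat \<Rightarrow> nat \<Rightarrow> 'a::times) \<Rightarrow> (nat \<Rightarrow> nat \<Rightarrow> 'a) \<Rightarrow> nat \<Rightarrow> nat \<Rightarrow> 'a" where
  "kron r2 c2 A B i j = A (i div r2) (j div c2) * B (i mod r2) (j mod c2)"

definition monomial_matrix :: "nat \<Rightarrow> (nat \<Rightarrow> nat \<Rightarrow> 'a::zero) \<Rightarrow> bool" where
  "monomial_matrix n M \<longleftrightarrow> (\<exists>\<sigma> d. \<sigma> permutes {..<n} \<and> (\<forall>i<n. d i \<noteq> 0) \<and>
     (\<forall>i<n. \<forall>j<n. M i j = (if j = \<sigma> i then d i else 0)))"

definition vec_mat_mult :: "nat \<Rightarrow> (nat \<Rightarrow> 'a::comm_ring) \<Rightarrow> (nat \<Rightarrow> nat \<Rightarrow> 'a) \<Rightarrow> nat \<Rightarrow> 'a" where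
  "vec_mat_mult n x M = (\<lambda>j. if j < n then (\<Sum>i<n. x i * M i j) else 0)"

definition lin_equiv :: "nat \<Rightarrow> (nat \<Rightarrow> 'a::comm_ring) set \<Rightarrow> (nat \<Rightarrow> 'a) set \<Rightarrow> bool" where
  "lin_equiv n C D \<longleftrightarrow> (\<exists>M. monomial_matrix n M \<and> D = (\<lambda>x. vec_mat_mult n x M) ` C)"

end

theory Submission
  imports Defs "HOL-Library.Function_Algebras" "HOL.Vector_Spaces"
begin


definition sc :: "'a::field \<Rightarrow> (nat \<Rightarrow> 'a) \<Rightarrow> (nat \<Rightarrow> 'a)" where
  "sc a f = (\<lambda>i. a * f i)"

lemma sc_apply: "sc a f i = a * f i" by (simp add: sc_def)

interpretation V: vector_space "sc :: 'a::field \<Rightarrow> _"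
  by unfold_locales (auto simp: sc_def fun_eq_iff algebra_simps)

interpretation VP: vector_space_pair "sc :: 'a::field \<Rightarrow> _" "sc :: 'a::field \<Rightarrow> _"
  by unfold_locales

lemma sum_fun_apply: "(\<Sum>i\<in>I. f i) x = (\<Sum>i\<in>I. f i x)"
  by (induction I rule: infinite_finite_induct) auto



lemma vecs_zero_outside: "x \<in> vecs n \<Longrightarrow> n \<le> i \<Longrightarrow> x i = 0"
  by (simp add: vecs_def)

lemma card_vecs: "card (vecs n :: (nat \<Rightarrow> 'a::{zero,finite}) set) = card (UNIV::'a set) ^ n \<and> finite (vecs n :: (nat \<Rightarrow> 'a) set)"
proof -
  let ?P = "PiE {..<n} (\<lambda>_. UNIV :: 'a set)"
  let ?h = "\<lambda>(g::nat\<Rightarrow>'a) i. if i<n then g i else (0::'a)"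
  have b: "bij_betw ?h ?P (vecs n)"
  proof (rule bij_betwI')
    fix x y assume "x \<in> ?P" "y \<in> ?P"
    then show "(?h x = ?h y) = (x = y)"
      by (auto simp: fun_eq_iff PiE_def extensional_def) (metis not_less)
  next
    fix x assume "x \<in> ?P" then show "?h x \<in> vecs n" by (auto simp: vecs_def)
  next
    fix y :: "nat \<Rightarrow> 'a" assume "y \<in> vecs n"
    then show "\<exists>x\<in>?P. y = ?h x"
      by (intro bexI[of _ "restrict y {..<n}"]) (auto simp: fun_eq_iff vecs_def)
  qed
  have "card ?P = card (UNIV::'a set) ^ n" by (simp add: card_PiE)
  moreover have "finite ?P" by (simp add: finite_PiE)
  ultimately show ?thesis using bij_betw_same_card[OF b] bij_betw_finite[OF b] by auto
qed

lemma subspace_vecs: "V.subspace (vecs n)"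
  by (auto simp: V.subspace_def vecs_def sc_apply)

lemma subspace_code: "linear_code n C \<Longrightarrow> V.subspace C"
proof -
  assume "linear_code n C"
  then show ?thesis unfolding linear_code_def V.subspace_def
    by (auto simp: sc_def plus_fun_def zero_fun_def)
qed

lemma card_span_indep:
  fixes S :: "(nat \<Rightarrow> 'a::{field,finite}) set"
  assumes "finite S" "V.independent S"
  shows "finite (V.span S) \<and> card (V.span S) = card (UNIV::'a set) ^ card S"
  using assms
proof (induction S rule: finite_induct)
  case empty
  then show ?case by (simp add: V.span_empty)
next
  case (insert x S)
  have xS: "x \<notin> V.span S" using insert(2,4) by (simp add: V.independent_insert)
  have iS: "V.independent S" using insert(2,4) by (simp add: V.independent_insert)
  have IH: "finite (V.span S)" "card (V.span S) = card (UNIV::'a set) ^ card S" using insert.IH iS by auto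
  let ?h = "\<lambda>(a::'a, y). sc a x + y"
  have b: "bij_betw ?h (UNIV \<times> V.span S) (V.span (insert x S))"
  proof (rule bij_betwI')
    fix p p' :: "'a \<times> (nat \<Rightarrow> 'a)" assume p: "p \<in> UNIV \<times> V.span S" "p' \<in> UNIV \<times> V.span S"
    obtain a y a' y' where pp: "p = (a,y)" "p' = (a',y')" by (cases p, cases p') auto
    show "(?h p = ?h p') = (p = p')"
    proof
      assume e: "?h p = ?h p'"
      have "sc (a - a') x = y' - y" using e pp
        by (auto simp: fun_eq_iff algebra_simps sc_apply)
      moreover have "y' - y \<in> V.span S" using p pp by (auto intro: V.span_diff)
      ultimately have "a = a'"
        using xS V.span_scale[of "sc (a - a') x" S "inverse (a - a')"]
        by (metis V.scale_eq_0_iff V.vector_space_assms(3) divide_inverse_commute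
            divide_self_if eq_iff_diff_eq_0 V.vector_space_assms(4))
      then show "p = p'" using e pp by auto
    qed auto
  next
    fix p :: "'a \<times> (nat \<Rightarrow> 'a)" assume "p \<in> UNIV \<times> V.span S"
    then obtain a y where py: "p = (a,y)" "y \<in> V.span S" by auto
    have "sc a x \<in> V.span (insert x S)" by (intro V.span_scale V.span_base) auto
    moreover have "y \<in> V.span (insert x S)" using py V.span_mono[of S "insert x S"] by auto
    ultimately show "?h p \<in> V.span (insert x S)" using py by (auto intro: V.span_add)
  next
    fix z assume "z \<in> V.span (insert x S)"
    then obtain k where "z - sc k x \<in> V.span S" by (auto simp: V.span_insert)
    then show "\<exists>p\<in>UNIV \<times> V.span S. z = ?h p"
      by (intro bexI[of _ "(k, z - sc k x)"]) auto
  qed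
  have "finite ((UNIV::'a set) \<times> V.span S)" using IH by (intro finite_cartesian_product) auto
  moreover have "card ((UNIV::'a set) \<times> V.span S) = card (UNIV::'a set) * card (UNIV::'a set) ^ card S" using IH by (simp add: card_cartesian_product)
  ultimately show ?case using bij_betw_same_card[OF b] bij_betw_finite[OF b] insert by auto
qed



lemma card_field_ge2: "2 \<le> card (UNIV :: 'a::{field,finite} set)"
proof -
  have "{0,1} \<subseteq> (UNIV :: 'a set)" by auto
  then have "card {0::'a,1} \<le> card (UNIV :: 'a set)" by (intro card_mono) auto
  then show ?thesis by simp
qed

lemma fiber_count:
  fixes L :: "(nat \<Rightarrow> 'a::{field,finite}) \<Rightarrow> (nat \<Rightarrow> 'a)"
  assumes lin: "Vector_Spaces.linear sc sc L" and U: "V.subspace U" "finite U"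
  shows "card U = card {x\<in>U. L x = 0} * card (L ` U)"
proof -
  let ?K = "{x\<in>U. L x = 0}"
  have "U = (\<Union>y\<in>L ` U. {x\<in>U. L x = y})" by auto
  then have "card U = card (\<Union>y\<in>L ` U. {x\<in>U. L x = y})" by simp
  also have "\<dots> = (\<Sum>y\<in>L ` U. card {x\<in>U. L x = y})"
    by (rule card_UN_disjoint) (use U in auto)
  also have "\<dots> = (\<Sum>y\<in>L ` U. card ?K)"
  proof (rule sum.cong)
    fix y assume "y \<in> L ` U"
    then obtain x0 where x0: "x0 \<in> U" "L x0 = y" by auto
    have "bij_betw (\<lambda>z. z + x0) ?K {x\<in>U. L x = y}"
    proof (rule bij_betwI')
      fix z assume "z \<in> ?K"
      then show "z + x0 \<in> {x\<in>U. L x = y}"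
        using x0 U VP.linear_add[OF lin] by (auto intro: V.subspace_add)
    next
      fix x assume x: "x \<in> {x\<in>U. L x = y}"
      show "\<exists>z\<in>?K. x = z + x0"
        using x x0 U VP.linear_diff[OF lin] by (intro bexI[of _ "x - x0"]) (auto intro: V.subspace_diff)
    qed auto
    then show "card {x\<in>U. L x = y} = card ?K" by (simp add: bij_betw_same_card)
  qed simp
  finally show ?thesis by simp
qed

definition ev :: "nat \<Rightarrow> nat \<Rightarrow> 'a::zero_neq_one" where
  "ev r = (\<lambda>i. if i = r then 1 else 0)"

lemma vec_decomp:
  fixes y :: "nat \<Rightarrow> 'a::field"
  assumes "y \<in> vecs m"
  shows "(\<Sum>r<m. sc (y r) (ev r)) = y"
proof
  fix i
  have "(\<Sum>r<m. sc (y r) (ev r)) i = (\<Sum>r<m. y r * (if i = r then 1 else 0))"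
    by (simp add: sum_fun_apply sc_apply ev_def)
  also have "\<dots> = y i" using assms by (auto simp: vecs_def if_distrib[of "\<lambda>x. _ * x"] cong: if_cong)
  finally show "(\<Sum>r<m. sc (y r) (ev r)) i = y i" .
qed

lemma syndrome_map:
  fixes C :: "(nat \<Rightarrow> 'a::{field,finite}) set"
  assumes lin: "linear_code n C" and dim: "code_dim C k"
  obtains L where "Vector_Spaces.linear sc sc L" "\<And>x. L x \<in> vecs (n-k)"
    "\<And>y. y \<in> vecs (n-k) \<Longrightarrow> \<exists>x\<in>vecs n. L x = y" "\<And>x. x\<in>vecs n \<Longrightarrow> L x = 0 \<longleftrightarrow> x \<in> C"
proof -
  let ?q = "card (UNIV :: 'a set)"
  have q2: "2 \<le> ?q" by (rule card_field_ge2)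
  have sC: "V.subspace C" using lin by (rule subspace_code)
  have Cv: "C \<subseteq> vecs n" using lin by (simp add: linear_code_def)
  have fv: "finite (vecs n :: (nat\<Rightarrow>'a) set)" using card_vecs by blast
  have fC: "finite C" using Cv fv finite_subset by blast
  obtain Bc where Bc: "Bc \<subseteq> C" "V.independent Bc" "C \<subseteq> V.span Bc" "card Bc = V.dim C"
    by (rule V.basis_exists[of C])
  have fBc: "finite Bc" using Bc fC finite_subset by blast
  have spBc: "V.span Bc = C" using Bc sC by (intro V.span_subspace) auto
  have "card C = ?q ^ card Bc" using card_span_indep[OF fBc Bc(2)] spBc by simp
  then have cBc: "card Bc = k" using dim q2 by (simp add: code_dim_def power_inject_exp)
  obtain Bv where Bv: "Bc \<subseteq> Bv" "Bv \<subseteq> vecs n" "V.independent Bv" "vecs n \<subseteq> V.span Bv"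
    by (rule V.maximal_independent_subset_extend[of Bc "vecs n"]) (use Bc Cv in auto)
  have fBv: "finite Bv" using Bv fv finite_subset by blast
  have spBv: "V.span Bv = vecs n" using Bv subspace_vecs by (intro V.span_subspace) auto
  have "card (vecs n :: (nat\<Rightarrow>'a) set) = ?q ^ card Bv" using card_span_indep[OF fBv Bv(3)] spBv by simp
  then have cBv: "card Bv = n" using card_vecs[where 'a='a] q2 by (simp add: power_inject_exp)
  define D where "D = Bv - Bc"
  have cD: "card D = n - k" using cBc cBv Bv(1) fBv by (simp add: D_def card_Diff_subset finite_subset)
  have fD: "finite D" using fBv by (simp add: D_def)
  obtain w where w: "bij_betw w D {0..<n-k}" using ex_bij_betw_finite_nat[OF fD] cD by metis
  define g where "g b = (if b \<in> D then ev (w b) else (0::nat\<Rightarrow>'a))" for b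
  define L where "L = VP.construct Bv g"
  have linL: "Vector_Spaces.linear sc sc L" unfolding L_def by (rule VP.linear_construct[OF Bv(3)])
  have Lb: "L b = g b" if "b \<in> Bv" for b unfolding L_def using VP.construct_basis[OF Bv(3) that] .
  have wD: "w b < n - k" if "b \<in> D" for b using w that by (auto simp: bij_betw_def)
  have gv: "g b \<in> vecs (n-k)" for b
    using wD[of b] by (cases "b \<in> D") (auto simp: g_def ev_def vecs_def)
  have Lv: "L x \<in> vecs (n-k)" for x
  proof -
    have "L x \<in> V.span (g ` Bv)" unfolding L_def by (rule VP.construct_in_span[OF Bv(3)])
    moreover have "V.span (g ` Bv) \<subseteq> vecs (n-k)" using gv subspace_vecs by (intro V.span_minimal) auto
    ultimately show ?thesis by auto
  qed
  have surj: "\<exists>x\<in>vecs n. L x = y" if y: "y \<in> vecs (n-k)" for y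
  proof -
    define x where "x = (\<Sum>b\<in>D. sc (y (w b)) b)"
    have "x \<in> V.span Bv" unfolding x_def
      by (intro V.span_sum V.span_scale V.span_base) (auto simp: D_def)
    then have xv: "x \<in> vecs n" using spBv by simp
    have "L x = (\<Sum>b\<in>D. sc (y (w b)) (L b))"
      unfolding x_def by (simp add: VP.linear_sum[OF linL] VP.linear_scale[OF linL])
    also have "\<dots> = (\<Sum>b\<in>D. sc (y (w b)) (ev (w b)))"
      by (intro sum.cong refl) (auto simp: Lb D_def g_def)
    also have "\<dots> = (\<Sum>r\<in>{0..<n-k}. sc (y r) (ev r))"
      using sum.reindex_bij_betw[OF w, of "\<lambda>r. sc (y r) (ev r)"] by simp
    also have "\<dots> = y" using vec_decomp[OF y] by (simp add: atLeast0LessThan)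
    finally show ?thesis using xv by blast
  qed
  have Cker: "L x = 0" if "x \<in> C" for x
  proof -
    have "L x = (\<lambda>_. 0) x"
      by (rule VP.linear_eq_on[OF linL VP.linear_zero, of x Bc])
         (use that spBc Bc(1) D_def Lb g_def Bv(1) in auto)
    then show ?thesis by simp
  qed
  let ?K = "{x\<in>vecs n. L x = 0}"
  have imL: "L ` vecs n = vecs (n-k)" using Lv surj by blast
  have "card (vecs n :: (nat\<Rightarrow>'a) set) = card ?K * card (vecs (n-k) :: (nat\<Rightarrow>'a) set)"
    using fiber_count[OF linL subspace_vecs fv] imL by simp
  then have "?q ^ n = card ?K * ?q ^ (n - k)" using card_vecs[where 'a='a] by simp
  moreover have "k \<le> n" using cBc cBv Bv(1) fBv card_mono by blast
  ultimately have "?q ^ k * ?q ^ (n-k) = card ?K * ?q ^ (n - k)" by (simp add: power_add[symmetric])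
  then have "card ?K = card C" using q2 dim by (simp add: code_dim_def)
  moreover have "C \<subseteq> ?K" using Cker Cv by auto
  moreover have "finite ?K" using fv by simp
  ultimately have "C = ?K" by (simp add: card_subset_eq)
  then have ker: "x \<in> vecs n \<Longrightarrow> L x = 0 \<longleftrightarrow> x \<in> C" for x by blast
  show ?thesis using that[OF linL Lv surj ker] by blast
qed



lemma nat_dvd_pow_minus1: "(q::nat) \<ge> 1 \<Longrightarrow> (q - 1) dvd (q^m - 1)"
proof (induction m)
  case 0 then show ?case by simp
next
  case (Suc m)
  have "q^m \<ge> 1" using Suc.prems by simp
  then have "q^(Suc m) - 1 = q*(q^m - 1) + (q - 1)" using Suc.prems
    by (simp add: algebra_simps diff_mult_distrib2)
  moreover have d1: "(q - 1) dvd q * (q^m - 1)" using Suc.IH Suc.prems by (simp add: dvd_mult)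
  moreover have d2: "(q-1) dvd (q-1)" by simp
  ultimately show ?case by (metis dvd_add)
qed

lemma hl_mult: "hamming_length (card (UNIV::'a::{field,finite} set)) m * (card (UNIV::'a set) - 1)
   = card (UNIV::'a set) ^ m - 1"
  unfolding hamming_length_def
  using nat_dvd_pow_minus1[of "card (UNIV::'a set)" m] card_field_ge2[where 'a='a] by simp

lemma card_nonzero_vecs: "card (vecs m - {0::nat\<Rightarrow>'a::{field,finite}}) = card (UNIV::'a set) ^ m - 1
   \<and> finite (vecs m - {0::nat\<Rightarrow>'a})"
proof -
  have "(0::nat\<Rightarrow>'a) \<in> vecs m" by (simp add: vecs_def)
  then show ?thesis using card_vecs[where 'a='a and n=m] by (simp add: card_Diff_singleton)
qed

definition Bcol :: "nat \<Rightarrow> (nat \<Rightarrow> nat \<Rightarrow> 'a::zero) \<Rightarrow> nat \<Rightarrow> nat \<Rightarrow> 'a" where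
  "Bcol m B b = (\<lambda>i. if i < m then B i b else 0)"

lemma Bcol_vecs: "Bcol m B b \<in> vecs m" by (simp add: Bcol_def vecs_def)

context
  fixes m :: nat and B :: "nat \<Rightarrow> nat \<Rightarrow> 'a::{field,finite}"
  assumes H: "hamming_pcm m B"
begin


lemma ham_nz: "b < hamming_length (card (UNIV::'a set)) m \<Longrightarrow> Bcol m B b \<noteq> 0"
  using H unfolding hamming_pcm_def Bcol_def by (auto simp: fun_eq_iff)

lemma ham_indep: "b < hamming_length (card (UNIV::'a set)) m \<Longrightarrow> b' < hamming_length (card (UNIV::'a set)) m \<Longrightarrow> b \<noteq> b' \<Longrightarrow> Bcol m B b' \<noteq> sc a (Bcol m B b)"
proof
  assume b: "b < hamming_length (card (UNIV::'a set)) m" "b' < hamming_length (card (UNIV::'a set)) m" "b \<noteq> b'" and e: "Bcol m B b' = sc a (Bcol m B b)"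
  have "\<forall>i<m. B i b' = a * B i b"
  proof (intro allI impI)
    fix i assume "i < m"
    then show "B i b' = a * B i b" using fun_cong[OF e, of i] by (simp add: Bcol_def sc_apply)
  qed
  then show False using H b unfolding hamming_pcm_def by blast
qed

lemma ham_uniq:
  assumes b: "b < hamming_length (card (UNIV::'a set)) m" "b' < hamming_length (card (UNIV::'a set)) m" and a: "a \<noteq> 0" and e: "sc a (Bcol m B b) = sc a' (Bcol m B b')"
  shows "b = b' \<and> a = a'"
proof -
  have a': "a' \<noteq> 0"
  proof
    assume "a' = 0"
    then have "sc a (Bcol m B b) = 0" using e by (simp add: sc_def fun_eq_iff)
    then show False using a ham_nz[OF b(1)] by simp
  qed
  have bb: "b = b'"
  proof (rule ccontr)
    assume "b \<noteq> b'"
    have "Bcol m B b' = sc (a / a') (Bcol m B b)"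
      using e a' by (simp add: sc_def fun_eq_iff field_simps)
    then show False using ham_indep[OF b \<open>b \<noteq> b'\<close>] by blast
  qed
  then have "a = a'" using e ham_nz[OF b(1)] by simp
  then show ?thesis using bb by simp
qed

lemma ham_cover:
  assumes s: "s \<in> vecs m" "s \<noteq> 0"
  shows "\<exists>b<hamming_length (card (UNIV::'a set)) m. \<exists>a. a \<noteq> 0 \<and> sc a (Bcol m B b) = s"
proof -
  let ?X = "{..<hamming_length (card (UNIV::'a set)) m} \<times> (UNIV - {0::'a})"
  let ?f = "\<lambda>(b, a). sc a (Bcol m B b)"
  have inj: "inj_on ?f ?X"
    by (rule inj_onI) (auto dest: ham_uniq)
  have sub: "?f ` ?X \<subseteq> vecs m - {0}"
    using ham_nz by (auto intro: V.subspace_scale[OF subspace_vecs] Bcol_vecs)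
  have "card (?f ` ?X) = hamming_length (card (UNIV::'a set)) m * (card (UNIV::'a set) - 1)"
    using card_image[OF inj] by (simp add: card_cartesian_product card_Diff_singleton)
  also have "\<dots> = card (vecs m - {0::nat\<Rightarrow>'a})" using hl_mult card_nonzero_vecs by metis
  finally have "?f ` ?X = vecs m - {0}"
    using sub card_nonzero_vecs[where 'a='a and m=m] by (simp add: card_subset_eq)
  then have "s \<in> ?f ` ?X" using s by auto
  then show ?thesis by auto
qed

end

definition lead :: "(nat \<Rightarrow> 'a::zero) \<Rightarrow> nat" where
  "lead x = (LEAST i. x i \<noteq> 0)"

lemma lead_nz: "x \<noteq> 0 \<Longrightarrow> x (lead x) \<noteq> 0"
  unfolding lead_def by (rule LeastI_ex) (auto simp: fun_eq_iff)

lemma lead_sc: "(a::'a::field) \<noteq> 0 \<Longrightarrow> lead (sc a x) = lead x"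
  unfolding lead_def by (simp add: sc_apply)

lemma ham_exists:
  assumes m: "2 \<le> m"
  shows "\<exists>B :: nat \<Rightarrow> nat \<Rightarrow> 'a::{field,finite}. hamming_pcm m B"
proof -
  let ?q = "card (UNIV::'a set)"
  let ?nb = "hamming_length ?q m"
  define R where "R = {x \<in> vecs m. x \<noteq> (0::nat\<Rightarrow>'a) \<and> x (lead x) = 1}"
  let ?X = "R \<times> (UNIV - {0::'a})"
  let ?f = "\<lambda>(x, a). sc a x"
  have inj: "inj_on ?f ?X"
  proof (rule inj_onI)
    fix p p' assume p: "p \<in> ?X" "p' \<in> ?X" and e: "?f p = ?f p'"
    obtain x a x' a' where pp: "p = (x,a)" "p' = (x',a')" by (cases p, cases p')
    have "lead x = lead x'" using lead_sc[of a x] lead_sc[of a' x'] e p pp by auto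
    then have "a = a'" using fun_cong[OF e, of "lead x"] p pp by (auto simp: R_def sc_apply)
    then have "x = x'" using e p pp by auto
    then show "p = p'" using pp \<open>a = a'\<close> by simp
  qed
  have im: "?f ` ?X = vecs m - {0}"
  proof
    show "?f ` ?X \<subseteq> vecs m - {0}"
      by (auto simp: R_def intro: V.subspace_scale[OF subspace_vecs])
  next
    show "vecs m - {0} \<subseteq> ?f ` ?X"
    proof
      fix s :: "nat \<Rightarrow> 'a" assume s: "s \<in> vecs m - {0}"
      let ?l = "lead s"
      have sl: "s ?l \<noteq> 0" using s lead_nz by auto
      have "sc (1 / s ?l) s \<in> R"
        using s sl lead_sc[of "1 / s ?l" s] V.subspace_scale[OF subspace_vecs]
        by (auto simp: R_def sc_apply fun_eq_iff)
      moreover have "s = sc (s ?l) (sc (1 / s ?l) s)" using sl by (simp add: sc_apply fun_eq_iff)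
      ultimately show "s \<in> ?f ` ?X" using sl by force
    qed
  qed
  have fR: "finite R" using card_vecs[where 'a='a and n=m] by (auto simp: R_def)
  have "card R * (?q - 1) = ?q ^ m - 1"
    using card_image[OF inj] im card_nonzero_vecs[where 'a='a and m=m]
    by (simp add: card_cartesian_product card_Diff_singleton)
  moreover have "?q - 1 \<noteq> 0" using card_field_ge2[where 'a='a] by simp
  ultimately have cR: "card R = ?nb" using hl_mult[where 'a='a and m=m] 
    by (metis mult_right_cancel)
  obtain r where r: "bij_betw r {0..<?nb} R" using ex_bij_betw_nat_finite[OF fR] cR by metis
  define B where "B i j = r j i" for i j
  have rR: "r j \<in> R" if "j < ?nb" for j using r that by (auto simp: bij_betw_def)
  have "hamming_pcm m B"
    unfolding hamming_pcm_def
  proof (intro conjI allI impI)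
    show "2 \<le> m" by fact
  next
    fix j assume j: "j < ?nb"
    then have "r j \<noteq> 0" "r j \<in> vecs m" using rR by (auto simp: R_def)
    then obtain i where "r j i \<noteq> 0" by (auto simp: fun_eq_iff)
    moreover have "i < m" using \<open>r j \<in> vecs m\<close> calculation by (auto simp: vecs_def) (meson not_less)
    ultimately show "\<exists>i<m. B i j \<noteq> 0" by (auto simp: B_def)
  next
    fix j j' assume j: "j < ?nb" "j' < ?nb" "j \<noteq> j'"
    show "\<not> (\<exists>a. \<forall>i<m. B i j' = a * B i j)"
    proof
      assume "\<exists>a. \<forall>i<m. B i j' = a * B i j"
      then obtain a where a: "\<forall>i<m. r j' i = a * r j i" by (auto simp: B_def)
      have v: "r j \<in> vecs m" "r j' \<in> vecs m" using rR[OF j(1)] rR[OF j(2)] by (auto simp: R_def)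
      have e: "r j' = sc a (r j)"
      proof
        fix i show "r j' i = sc a (r j) i"
          using a v by (cases "i < m") (auto simp: vecs_def sc_apply)
      qed
      have "a \<noteq> 0" using e rR[OF j(2)] by (auto simp: R_def sc_def fun_eq_iff)
      then have "?f (r j', 1) = ?f (r j, a)" using e by (simp add: sc_def)
      moreover have "(r j', 1) \<in> ?X" "(r j, a) \<in> ?X" using rR j \<open>a \<noteq> 0\<close> by auto
      ultimately have "(r j', (1::'a)) = (r j, a)" using inj_onD[OF inj] by blast
      then have "r j' = r j" by simp
      then show False using r j by (auto simp: bij_betw_def dest: inj_onD)
    qed
  qed
  then show ?thesis by blast
qed



lemma perm_match:
  fixes f g :: "nat \<Rightarrow> 'b"
  assumes c: "\<And>P. card {i. i<n \<and> f i = P} = card {j. j<n \<and> g j = P}"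
  shows "\<exists>\<sigma>. \<sigma> permutes {..<n} \<and> (\<forall>i<n. g (\<sigma> i) = f i)"
proof -
  define h where "h P = (SOME h. bij_betw h {i. i<n \<and> f i = P} {j. j<n \<and> g j = P})" for P
  have hb: "bij_betw (h P) {i. i<n \<and> f i = P} {j. j<n \<and> g j = P}" for P
  proof -
    have "\<exists>h. bij_betw h {i. i<n \<and> f i = P} {j. j<n \<and> g j = P}"
      by (rule finite_same_card_bij) (use c in auto)
    then show ?thesis unfolding h_def by (rule someI_ex)
  qed
  define \<sigma> where "\<sigma> i = (if i<n then h (f i) i else i)" for i
  have pr: "\<sigma> i < n \<and> g (\<sigma> i) = f i" if "i < n" for i
    using bij_betwE[OF hb[of "f i"]] that by (auto simp: \<sigma>_def)
  have inj: "inj_on \<sigma> {..<n}"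
  proof (rule inj_onI)
    fix i i' assume ii: "i \<in> {..<n}" "i' \<in> {..<n}" and e: "\<sigma> i = \<sigma> i'"
    have "f i = f i'" using pr[of i] pr[of i'] ii e by auto
    then have "h (f i) i = h (f i) i'" using e ii by (simp add: \<sigma>_def)
    then show "i = i'" using bij_betw_imp_inj_on[OF hb[of "f i"]] ii \<open>f i = f i'\<close>
      by (auto dest: inj_onD)
  qed
  have im: "\<sigma> ` {..<n} = {..<n}"
    by (rule endo_inj_surj) (use pr inj in auto)
  have "\<sigma> permutes {..<n}"
    by (rule bij_imp_permutes) (use inj im in \<open>auto simp: bij_betw_def \<sigma>_def\<close>)
  then show ?thesis using pr by blast
qed

definition cls :: "(nat \<Rightarrow> 'a::field) \<Rightarrow> (nat \<Rightarrow> 'a) set" where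
  "cls x = (\<lambda>a. sc a x) ` (UNIV - {0})"

lemma cls_eq:
  fixes x s :: "nat \<Rightarrow> 'a::field"
  assumes "x \<noteq> 0" "s \<noteq> 0"
  shows "cls x = cls s \<longleftrightarrow> (\<exists>a. a \<noteq> 0 \<and> sc a x = s)"
proof
  assume "cls x = cls s"
  moreover have "s \<in> cls s" unfolding cls_def by (rule image_eqI[of _ _ 1]) (auto simp: sc_def)
  ultimately have "s \<in> cls x" by simp
  then show "\<exists>a. a \<noteq> 0 \<and> sc a x = s" by (auto simp: cls_def)
next
  assume "\<exists>a. a \<noteq> 0 \<and> sc a x = s"
  then obtain a where a: "a \<noteq> 0" "sc a x = s" by blast
  show "cls x = cls s"
  proof
    show "cls x \<subseteq> cls s"
    proof
      fix z assume "z \<in> cls x"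
      then obtain b where "b \<noteq> 0" "z = sc b x" by (auto simp: cls_def)
      then have "z = sc (b / a) s" using a by (auto simp: sc_def fun_eq_iff) (metis mult.commute nonzero_mult_div_cancel_left times_divide_eq_right)
      then show "z \<in> cls s" using \<open>b \<noteq> 0\<close> a by (auto simp: cls_def)
    qed
  next
    show "cls s \<subseteq> cls x"
    proof
      fix z assume "z \<in> cls s"
      then obtain b where "b \<noteq> 0" "z = sc b s" by (auto simp: cls_def)
      then have "z = sc (b * a) x" using a by (auto simp: sc_def fun_eq_iff)
      then show "z \<in> cls x" using \<open>b \<noteq> 0\<close> a by (auto simp: cls_def)
    qed
  qed
qed

lemma count_cls:
  fixes F :: "nat \<Rightarrow> nat \<Rightarrow> 'a::field"
  assumes F: "\<And>i. i < n \<Longrightarrow> F i \<noteq> 0" and s: "s \<noteq> 0"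
  shows "card {i. i<n \<and> cls (F i) = cls s} = card {(i,a). i<n \<and> a \<noteq> 0 \<and> sc a (F i) = s}"
proof -
  have "bij_betw fst {(i,a). i<n \<and> a \<noteq> 0 \<and> sc a (F i) = s} {i. i<n \<and> cls (F i) = cls s}"
  proof (rule bij_betwI')
    fix p p' assume p: "p \<in> {(i,a). i<n \<and> a \<noteq> 0 \<and> sc a (F i) = s}" "p' \<in> {(i,a). i<n \<and> a \<noteq> 0 \<and> sc a (F i) = s}"
    show "(fst p = fst p') = (p = p')"
    proof
      assume "fst p = fst p'"
      then show "p = p'" using p F by (cases p, cases p') auto
    qed simp
  next
    fix p assume "p \<in> {(i,a). i<n \<and> a \<noteq> 0 \<and> sc a (F i) = s}"
    then obtain i a where ia: "p = (i,a)" "i<n" "a\<noteq>0" "sc a (F i) = s" by auto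
    then have "cls (F i) = cls s" using cls_eq[OF F[OF \<open>i<n\<close>] s] by blast
    then show "fst p \<in> {i. i<n \<and> cls (F i) = cls s}" using ia by simp
  next
    fix i assume "i \<in> {i. i<n \<and> cls (F i) = cls s}"
    then have i: "i < n" "cls (F i) = cls s" by auto
    then obtain a where "a \<noteq> 0" "sc a (F i) = s" using cls_eq[OF F[OF \<open>i<n\<close>] s] by blast
    then show "\<exists>p\<in>{(i,a). i<n \<and> a \<noteq> 0 \<and> sc a (F i) = s}. i = fst p"
      using i by (intro bexI[of _ "(i,a)"]) auto
  qed
  then show ?thesis by (simp add: bij_betw_same_card)
qed



lemma equiv_main:
  fixes C :: "(nat \<Rightarrow> 'a::{field,finite}) set" and L :: "(nat \<Rightarrow> 'a) \<Rightarrow> (nat \<Rightarrow> 'a)"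
    and K :: "nat \<Rightarrow> nat \<Rightarrow> 'a"
  assumes linL: "Vector_Spaces.linear sc sc L"
   and ker: "\<And>x. x \<in> vecs n \<Longrightarrow> L x = 0 \<longleftrightarrow> x \<in> C" and Cv: "C \<subseteq> vecs n"
   and Fv: "\<And>i. i<n \<Longrightarrow> L (ev i) \<in> vecs m \<and> L (ev i) \<noteq> 0"
   and Gv: "\<And>j. j<n \<Longrightarrow> Bcol m K j \<in> vecs m \<and> Bcol m K j \<noteq> 0"
   and cF: "\<And>s. s \<in> vecs m \<Longrightarrow> s \<noteq> 0 \<Longrightarrow> card {(i,a). i<n \<and> a\<noteq>0 \<and> sc a (L (ev i)) = s} = na"
   and cG: "\<And>s. s \<in> vecs m \<Longrightarrow> s \<noteq> 0 \<Longrightarrow> card {(j,a). j<n \<and> a\<noteq>0 \<and> sc a (Bcol m K j) = s} = na"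
  shows "lin_equiv n C (ker_code m n K)"
proof -
  define F where "F i = L (ev i)" for i
  define G where "G j = Bcol m K j" for j
  have fib: "card {i. i<n \<and> cls (F i) = P} = card {j. j<n \<and> cls (G j) = P}" for P
  proof (cases "\<exists>s. s \<in> vecs m \<and> s \<noteq> 0 \<and> P = cls s")
    case True
    then obtain s where s: "s \<in> vecs m" "s \<noteq> 0" "P = cls s" by blast
    have "card {i. i<n \<and> cls (F i) = P} = na"
      using count_cls[of n F s] cF[OF s(1,2)] Fv s by (simp add: F_def)
    moreover have "card {j. j<n \<and> cls (G j) = P} = na"
      using count_cls[of n G s] cG[OF s(1,2)] Gv s by (simp add: G_def)
    ultimately show ?thesis by simp
  next
    case False
    then have e1: "{i. i<n \<and> cls (F i) = P} = {}" and e2: "{j. j<n \<and> cls (G j) = P} = {}"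
      using Fv Gv by (auto simp: F_def G_def)
    show ?thesis by (simp only: e1 e2)
  qed
  obtain \<sigma> where \<sigma>: "\<sigma> permutes {..<n}" "\<forall>i<n. cls (G (\<sigma> i)) = cls (F i)"
    using perm_match[of n "\<lambda>i. cls (F i)" "\<lambda>j. cls (G j)"] fib by auto
  have \<sigma>n: "\<sigma> i < n" if "i<n" for i using permutes_in_image[OF \<sigma>(1)] that by auto
  have "\<exists>l. l \<noteq> 0 \<and> sc l (G (\<sigma> i)) = F i" if "i<n" for i
    using cls_eq[of "G (\<sigma> i)" "F i"] \<sigma>(2) that \<sigma>n[OF that] Fv[OF that] Gv[OF \<sigma>n[OF that]]
    by (auto simp: F_def G_def)
  then obtain lam where lam: "\<And>i. i<n \<Longrightarrow> lam i \<noteq> 0 \<and> sc (lam i) (G (\<sigma> i)) = F i" by metis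
  define M where "M i j = (if j = \<sigma> i then lam i else 0)" for i j
  have mono: "monomial_matrix n M" unfolding monomial_matrix_def M_def using \<sigma>(1) lam by blast
  have keyS: "(\<Sum>j<n. sc (vec_mat_mult n x M j) (G j)) = L x" if x: "x \<in> vecs n" for x
  proof -
    have "(\<Sum>j<n. sc (vec_mat_mult n x M j) (G j)) = (\<Sum>j<n. sc (\<Sum>i<n. x i * M i j) (G j))"
      by (intro sum.cong) (auto simp: vec_mat_mult_def)
    also have "\<dots> = (\<Sum>j<n. \<Sum>i<n. sc (x i * M i j) (G j))" by (simp add: V.scale_sum_left)
    also have "\<dots> = (\<Sum>i<n. \<Sum>j<n. sc (x i * M i j) (G j))" by (rule sum.swap)
    also have "\<dots> = (\<Sum>i<n. sc (x i * lam i) (G (\<sigma> i)))"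
    proof (intro sum.cong refl)
      fix i assume i: "i \<in> {..<n}"
      have "(\<Sum>j<n. sc (x i * M i j) (G j)) = (\<Sum>j<n. if j = \<sigma> i then sc (x i * lam i) (G j) else 0)"
        by (intro sum.cong) (auto simp: M_def sc_def fun_eq_iff)
      also have "\<dots> = sc (x i * lam i) (G (\<sigma> i))" using \<sigma>n i by (simp add: sum.delta)
      finally show "(\<Sum>j<n. sc (x i * M i j) (G j)) = sc (x i * lam i) (G (\<sigma> i))" .
    qed
    also have "\<dots> = (\<Sum>i<n. sc (x i) (F i))"
    proof (intro sum.cong refl)
      fix i assume "i \<in> {..<n}"
      then show "sc (x i * lam i) (G (\<sigma> i)) = sc (x i) (F i)"
        using lam[of i] by (auto simp: V.scale_scale[symmetric])
    qed
    also have "\<dots> = L (\<Sum>i<n. sc (x i) (ev i))"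
      by (simp add: F_def VP.linear_sum[OF linL] VP.linear_scale[OF linL])
    also have "\<dots> = L x" using vec_decomp[OF x] by simp
    finally show ?thesis .
  qed
  have kerS: "y \<in> ker_code m n K \<longleftrightarrow> (\<Sum>j<n. sc (y j) (G j)) = 0" if y: "y \<in> vecs n" for y
  proof -
    have e: "(\<Sum>j<n. sc (y j) (G j)) r = (if r < m then (\<Sum>j<n. K r j * y j) else 0)" for r
      by (auto simp: sum_fun_apply sc_apply G_def Bcol_def mult.commute)
    show ?thesis
    proof
      assume "y \<in> ker_code m n K"
      then show "(\<Sum>j<n. sc (y j) (G j)) = 0" by (auto simp: ker_code_def fun_eq_iff e)
    next
      assume "(\<Sum>j<n. sc (y j) (G j)) = 0"
      then have "\<forall>r<m. (\<Sum>j<n. K r j * y j) = 0" using e by (metis zero_fun_apply)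
      then show "y \<in> ker_code m n K" using y by (simp add: ker_code_def)
    qed
  qed
  have vm: "vec_mat_mult n x M \<in> vecs n" for x by (simp add: vec_mat_mult_def vecs_def)
  have "(\<lambda>x. vec_mat_mult n x M) ` C = ker_code m n K"
  proof
    show "(\<lambda>x. vec_mat_mult n x M) ` C \<subseteq> ker_code m n K"
    proof
      fix y assume "y \<in> (\<lambda>x. vec_mat_mult n x M) ` C"
      then obtain x where x: "x \<in> C" "y = vec_mat_mult n x M" by auto
      have xv: "x \<in> vecs n" using x Cv by auto
      have "L x = 0" using ker[OF xv] x by simp
      then show "y \<in> ker_code m n K" using kerS[OF vm] keyS[OF xv] x by simp
    qed
  next
    show "ker_code m n K \<subseteq> (\<lambda>x. vec_mat_mult n x M) ` C"
    proof
      fix y assume yk: "y \<in> ker_code m n K"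
      then have yv: "y \<in> vecs n" by (simp add: ker_code_def)
      define x where "x i = (if i < n then y (\<sigma> i) / lam i else 0)" for i
      have xv: "x \<in> vecs n" by (simp add: x_def vecs_def)
      have xy: "vec_mat_mult n x M = y"
      proof
        fix j
        show "vec_mat_mult n x M j = y j"
        proof (cases "j < n")
          case False
          then show ?thesis using yv by (simp add: vec_mat_mult_def vecs_def)
        next
          case True
          define i0 where "i0 = inv \<sigma> j"
          have i0: "i0 < n" "\<sigma> i0 = j" using True \<sigma>(1) unfolding i0_def
            using permutes_in_image[OF permutes_inv[OF \<sigma>(1)], of j]
            by (auto simp: permutes_inverses)
          have eq: "(j = \<sigma> i) \<longleftrightarrow> (i = i0)" for i
            using permutes_inv_eq[OF \<sigma>(1)] unfolding i0_def by metis
          have "(\<Sum>i<n. x i * M i j) = (\<Sum>i<n. if i = i0 then x i * lam i else 0)"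
            by (intro sum.cong) (auto simp: M_def eq)
          also have "\<dots> = x i0 * lam i0" using i0 by (simp add: sum.delta)
          also have "\<dots> = y j" using i0 lam[of i0] by (simp add: x_def)
          finally show ?thesis using True by (simp add: vec_mat_mult_def)
        qed
      qed
      have "L x = 0" using keyS[OF xv] kerS[OF yv] yk xy by simp
      then have "x \<in> C" using ker[OF xv] by simp
      then show "y \<in> (\<lambda>x. vec_mat_mult n x M) ` C" using xy by force
    qed
  qed
  then show ?thesis unfolding lin_equiv_def using mono by blast
qed



lemma ev_vecs: "i < n \<Longrightarrow> ev i \<in> vecs n"
  by (simp add: ev_def vecs_def)

lemma covering_full:
  fixes C :: "(nat \<Rightarrow> 'a::{zero,finite}) set"
  assumes "C = vecs n"
  shows "covering_radius n C = 0"
proof -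
  have fv: "finite (vecs n :: (nat\<Rightarrow>'a) set)" using card_vecs by blast
  have d0: "dist_to_code n C v = 0" if "v \<in> vecs n" for v
  proof -
    have "hdist n v v = 0" by (simp add: hdist_def)
    then have "0 \<in> (\<lambda>c. hdist n v c) ` C" using that assms by force
    then show ?thesis unfolding dist_to_code_def using fv assms
      by (metis Min_le finite_imageI le_zero_eq)
  qed
  have "(0::nat\<Rightarrow>'a) \<in> vecs n" by (simp add: vecs_def)
  then have "(\<lambda>v. dist_to_code n C v) ` vecs n = {0}" using d0 by force
  then show ?thesis by (simp add: covering_radius_def)
qed

lemma ev_notin:
  fixes C :: "(nat \<Rightarrow> 'a::field) set"
  assumes lin: "linear_code n C" and md: "min_dist n C 2" and i: "i < n"
  shows "ev i \<notin> C"
proof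
  assume e: "ev i \<in> C"
  have z: "(\<lambda>_. 0) \<in> C" using lin by (simp add: linear_code_def)
  have ne: "ev i \<noteq> (\<lambda>_. (0::'a))" by (auto simp: ev_def fun_eq_iff)
  have "{j. j < n \<and> ev i j \<noteq> (0::'a)} = {i}" using i by (auto simp: ev_def)
  then have "hdist n (ev i) (\<lambda>_. (0::'a)) = 1" by (simp add: hdist_def)
  then show False using md e z ne unfolding min_dist_def by fastforce
qed

lemma count_syn:
  fixes C :: "(nat \<Rightarrow> 'a::{field,finite}) set" and L :: "(nat \<Rightarrow> 'a) \<Rightarrow> (nat \<Rightarrow> 'a)"
  assumes linL: "Vector_Spaces.linear sc sc L"
   and ker: "\<And>x. x \<in> vecs n \<Longrightarrow> L x = 0 \<longleftrightarrow> x \<in> C" and Cv: "C \<subseteq> vecs n"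
   and na: "\<forall>v \<in> vecs n - C. card {c\<in>C. hdist n v c = 1} = na"
   and v: "v \<in> vecs n" "L v = s" "s \<noteq> 0"
  shows "card {(i,a). i<n \<and> a\<noteq>0 \<and> sc a (L (ev i)) = s} = na"
proof -
  have vC: "v \<notin> C" using ker[OF v(1)] v by auto
  let ?P = "{(i,a). i<n \<and> a\<noteq>0 \<and> sc a (L (ev i)) = s}"
  let ?Q = "{c\<in>C. hdist n v c = 1}"
  let ?phi = "\<lambda>(i,a). v - sc a (ev i)"
  have hd1: "hdist n v (v - sc a (ev i)) = 1" if "i < n" "a \<noteq> 0" for i a
  proof -
    have "{j. j < n \<and> v j \<noteq> (v - sc a (ev i)) j} = {i}" using that by (auto simp: ev_def sc_apply)
    then show ?thesis by (simp add: hdist_def)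
  qed
  have "bij_betw ?phi ?P ?Q"
  proof (rule bij_betwI')
    fix p p' assume p: "p \<in> ?P" "p' \<in> ?P"
    obtain i a i' a' where pp: "p = (i,a)" "p' = (i',a')" by (cases p, cases p')
    show "(?phi p = ?phi p') = (p = p')"
    proof
      assume e: "?phi p = ?phi p'"
      have "a * ev i i = a' * ev i' i" using fun_cong[OF e, of i] pp by (simp add: sc_apply)
      then have "i = i' \<and> a = a'" using p pp by (auto simp: ev_def split: if_splits)
      then show "p = p'" using pp by simp
    qed simp
  next
    fix p assume p: "p \<in> ?P"
    then obtain i a where ia: "p = (i,a)" "i<n" "a\<noteq>0" "sc a (L (ev i)) = s" by auto
    have cv: "v - sc a (ev i) \<in> vecs n"
      using v ev_vecs[OF ia(2)] subspace_vecs by (intro V.subspace_diff V.subspace_scale) auto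
    have "L (v - sc a (ev i)) = 0" using ia v
      by (simp add: VP.linear_diff[OF linL] VP.linear_scale[OF linL])
    then have "v - sc a (ev i) \<in> C" using ker[OF cv] by simp
    then show "?phi p \<in> ?Q" using hd1[OF ia(2,3)] ia by simp
  next
    fix c assume c: "c \<in> ?Q"
    then have cC: "c \<in> C" and "card {j. j < n \<and> v j \<noteq> c j} = 1" by (auto simp: hdist_def)
    then obtain i where ii: "{j. j < n \<and> v j \<noteq> c j} = {i}" by (auto simp: card_Suc_eq)
    have iff: "(j < n \<and> v j \<noteq> c j) \<longleftrightarrow> j = i" for j
      using ii by (metis (mono_tags, lifting) mem_Collect_eq singletonD singletonI)
    have i: "i < n" "v i \<noteq> c i" using iff[of i] by auto
    define a where "a = v i - c i"
    have a: "a \<noteq> 0" using i by (simp add: a_def)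
    have cvec: "c \<in> vecs n" using cC Cv by auto
    have ceq: "c = v - sc a (ev i)"
    proof
      fix j
      show "c j = (v - sc a (ev i)) j"
      proof (cases "j < n")
        case True
        show ?thesis
        proof (cases "j = i")
          case True then show ?thesis by (simp add: a_def ev_def sc_apply)
        next
          case False
          then have "v j = c j" using iff[of j] \<open>j < n\<close> by blast
          then show ?thesis using False by (simp add: ev_def sc_apply)
        qed
      next
        case False
        then show ?thesis using cvec v(1) i by (auto simp: vecs_def ev_def sc_apply)
      qed
    qed
    have "L c = 0" using ker[OF cvec] cC by simp
    then have "sc a (L (ev i)) = s" using ceq v
      by (simp add: VP.linear_diff[OF linL] VP.linear_scale[OF linL])
    then show "\<exists>p\<in>?P. c = ?phi p" using i a ceq by (intro bexI[of _ "(i,a)"]) auto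
  qed
  then have "card ?P = card ?Q" by (rule bij_betw_same_card)
  then show ?thesis using na v(1) vC by simp
qed



theorem proposition3p11:
  fixes C :: "(nat \<Rightarrow> 'a::{field,finite}) set"
    and n k na :: nat
    and A :: "nat \<Rightarrow> nat \<Rightarrow> 'a"
  assumes lin: "linear_code n C"
    and dim: "code_dim C k"
    and md: "min_dist n C 2"
    and cr: "completely_regular n C"
    and rho: "covering_radius n C = 1"
    and na: "\<forall>v \<in> vecs n - C. card {c\<in>C. hdist n v c = 1} = na"
    and A: "generator_matrix 1 na A (rep_code na)"
  shows "(k = n - 1 \<longrightarrow> na = n \<and> lin_equiv n C (ker_code 1 n A))
       \<and> (k < n - 1 \<longrightarrow> na dvd n \<and>
            (\<exists>m. hamming_length (card (UNIV :: 'a set)) m = n div na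
               \<and> (\<exists>B :: nat \<Rightarrow> nat \<Rightarrow> 'a. hamming_pcm m B)
               \<and> (\<forall>B. hamming_pcm m B \<longrightarrow>
                     lin_equiv n C (ker_code m n (kron m (n div na) A B)))))"
proof -
  let ?q = "card (UNIV :: 'a set)"
  have q2: "2 \<le> ?q" by (rule card_field_ge2)
  have Cv: "C \<subseteq> vecs n" using lin by (simp add: linear_code_def)
  have fv: "finite (vecs n :: (nat\<Rightarrow>'a) set)" and cv: "card (vecs n :: (nat\<Rightarrow>'a) set) = ?q ^ n"
    using card_vecs by blast+
  have cC: "card C = ?q ^ k" using dim by (simp add: code_dim_def)
  have "card C \<le> card (vecs n :: (nat\<Rightarrow>'a) set)" using Cv fv by (rule card_mono[rotated])
  then have kn: "k \<le> n" using cC cv q2 by (simp add: power_le_imp_le_exp)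
  have kn': "k < n"
  proof (rule ccontr)
    assume "\<not> k < n"
    then have "k = n" using kn by simp
    then have "card C = card (vecs n :: (nat\<Rightarrow>'a) set)" using cC cv by simp
    then have "C = vecs n" using Cv fv by (simp add: card_subset_eq)
    then have "covering_radius n C = 0" by (rule covering_full)
    then show False using rho by simp
  qed
  obtain L where linL: "Vector_Spaces.linear sc sc L" and Lv: "\<And>x. L x \<in> vecs (n-k)"
    and surj: "\<And>y. y \<in> vecs (n-k) \<Longrightarrow> \<exists>x\<in>vecs n. L x = y"
    and ker: "\<And>x. x\<in>vecs n \<Longrightarrow> L x = 0 \<longleftrightarrow> x \<in> C"
    using syndrome_map[OF lin dim] by blast
  define m where "m = n - k"
  have m1: "1 \<le> m" using kn' by (simp add: m_def)
  have Fv: "L (ev i) \<in> vecs m \<and> L (ev i) \<noteq> 0" if "i < n" for i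
    using Lv ker[OF ev_vecs[OF that]] ev_notin[OF lin md that] by (simp add: m_def)
  have cF: "card {(i,a). i<n \<and> a\<noteq>0 \<and> sc a (L (ev i)) = s} = na" if s: "s \<in> vecs m" "s \<noteq> 0" for s
  proof -
    obtain v where "v \<in> vecs n" "L v = s" using surj s by (auto simp: m_def)
    then show ?thesis using count_syn[OF linL ker Cv na] s by blast
  qed
  have rs: "row_space 1 na A = rep_code na" and crs: "card (rep_code na :: (nat\<Rightarrow>'a) set) = ?q"
    using A by (auto simp: generator_matrix_def)
  have s1: "(\<Sum>r<(1::nat). f r) = f 0" for f :: "nat \<Rightarrow> 'a" by simp
  obtain c0 where c0: "\<And>j. j < na \<Longrightarrow> A 0 j = c0"
  proof -
    let ?x = "(\<lambda>j. if j < na then (\<Sum>r<(1::nat). (\<lambda>_. 1) r * A r j) else 0)"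
    have e: "(\<lambda>j. if j < na then A 0 j else 0) = ?x" by (simp only: s1 mult_1_left)
    have "?x \<in> row_space 1 na A"
      unfolding row_space_def by (rule CollectI, rule exI, rule refl)
    then have "(\<lambda>j. if j < na then A 0 j else 0) \<in> rep_code na" using rs e by metis
    then obtain c where "\<forall>j<na. A 0 j = c" by (auto simp: rep_code_def)
    then show ?thesis using that by blast
  qed
  have rs0: "row_space 1 na A \<subseteq> {0}" if "c0 = 0"
  proof
    fix x assume "x \<in> row_space 1 na A"
    then obtain u where "x = (\<lambda>j. if j < na then (\<Sum>r<(1::nat). u r * A r j) else 0)"
      unfolding row_space_def by blast
    then have "x = (\<lambda>j. if j < na then u 0 * A 0 j else 0)" by (simp only: s1)
    then show "x \<in> {0}" using c0 that by (auto simp: fun_eq_iff)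
  qed
  have c0nz: "c0 \<noteq> 0"
  proof
    assume "c0 = 0"
    then have "card (row_space 1 na A) \<le> card {0::nat\<Rightarrow>'a}" using rs0 by (intro card_mono) auto
    then show False using rs crs q2 by simp
  qed
  have nap: "0 < na"
  proof (rule ccontr)
    assume "\<not> 0 < na"
    then have "rep_code na = {0::nat\<Rightarrow>'a}" by (auto simp: rep_code_def vecs_def fun_eq_iff)
    then show False using crs q2 by simp
  qed
  define S where "S s = {(i,a). i<n \<and> a\<noteq>0 \<and> sc a (L (ev i)) = s}" for s
  have PU: "{..<n} \<times> (UNIV - {0::'a}) = (\<Union>s\<in>vecs m - {0}. S s)"
  proof
    show "{..<n} \<times> (UNIV - {0::'a}) \<subseteq> (\<Union>s\<in>vecs m - {0}. S s)"
    proof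
      fix p assume "p \<in> {..<n} \<times> (UNIV - {0::'a})"
      then obtain i a where p: "p = (i,a)" "i < n" "a \<noteq> 0" by auto
      have "sc a (L (ev i)) \<in> vecs m" using Fv[OF p(2)] subspace_vecs by (intro V.subspace_scale) auto
      moreover have "sc a (L (ev i)) \<noteq> 0" using Fv[OF p(2)] p(3) by simp
      ultimately show "p \<in> (\<Union>s\<in>vecs m - {0}. S s)" using p by (auto simp: S_def)
    qed
  qed (auto simp: S_def)
  have fnz: "finite (vecs m - {0::nat\<Rightarrow>'a})" and cnz: "card (vecs m - {0::nat\<Rightarrow>'a}) = ?q ^ m - 1"
    using card_nonzero_vecs by blast+
  have fS: "finite (S s)" for s
    by (rule finite_subset[of _ "{..<n} \<times> UNIV"]) (auto simp: S_def)
  have "card ({..<n} \<times> (UNIV - {0::'a})) = (\<Sum>s\<in>vecs m - {0}. card (S s))"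
    unfolding PU by (rule card_UN_disjoint) (use fnz fS in \<open>auto simp: S_def\<close>)
  also have "\<dots> = (\<Sum>s\<in>vecs m - {0::nat\<Rightarrow>'a}. na)" using cF by (intro sum.cong refl) (auto simp: S_def)
  finally have count: "n * (?q - 1) = (?q ^ m - 1) * na"
    using cnz by (simp add: card_cartesian_product card_Diff_singleton)
  have q1: "?q - 1 \<noteq> 0" using q2 by simp
  show ?thesis
  proof (intro conjI impI)
    assume k1: "k = n - 1"
    then have mm: "m = 1" using kn' by (simp add: m_def)
    then have "n * (?q - 1) = na * (?q - 1)" using count by (metis mult.commute power_one_right)
    then show nn: "na = n" using q1 by (metis mult_right_cancel)
    show "lin_equiv n C (ker_code 1 n A)"
    proof (rule equiv_main[OF linL ker Cv])
      show "\<And>i. i < n \<Longrightarrow> L (ev i) \<in> vecs 1 \<and> L (ev i) \<noteq> 0" using Fv mm by simp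
      show "\<And>s. s \<in> vecs 1 \<Longrightarrow> s \<noteq> 0 \<Longrightarrow> card {(i,a). i<n \<and> a\<noteq>0 \<and> sc a (L (ev i)) = s} = na"
        using cF mm by simp
      show "Bcol 1 A j \<in> vecs 1 \<and> Bcol 1 A j \<noteq> 0" if j: "j < n" for j
      proof -
        have "Bcol 1 A j 0 \<noteq> 0" using c0 c0nz nn j by (simp add: Bcol_def)
        then show ?thesis using Bcol_vecs[of 1 A j] by auto
      qed
      fix s :: "nat \<Rightarrow> 'a" assume s: "s \<in> vecs 1" "s \<noteq> 0"
      have s0: "s 0 \<noteq> 0"
      proof
        assume "s 0 = 0"
        have "s i = 0" for i using \<open>s 0 = 0\<close> s(1) by (cases i) (auto simp: vecs_def)
        then have "s = 0" by (simp add: fun_eq_iff)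
        then show False using s by simp
      qed
      have key: "sc a (Bcol 1 A j) = s \<longleftrightarrow> a = s 0 / c0" if j: "j < n" for j a
      proof
        assume "sc a (Bcol 1 A j) = s"
        then have "a * c0 = s 0" using fun_cong[of _ _ 0] c0[of j] j nn by (force simp: sc_apply Bcol_def)
        then show "a = s 0 / c0" using c0nz by (simp add: field_simps)
      next
        assume a: "a = s 0 / c0"
        show "sc a (Bcol 1 A j) = s"
        proof
          fix i show "sc a (Bcol 1 A j) i = s i"
            using a c0[of j] j nn c0nz s(1) by (cases "i = 0") (auto simp: sc_apply Bcol_def vecs_def)
        qed
      qed
      have "{(j,a). j<n \<and> a\<noteq>0 \<and> sc a (Bcol 1 A j) = s} = (\<lambda>j. (j, s 0 / c0)) ` {..<n}"
        using key s0 c0nz by auto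
      moreover have "card ((\<lambda>j. (j, s 0 / c0)) ` {..<n}) = n" by (subst card_image) (auto intro: inj_onI)
      ultimately show "card {(j,a). j<n \<and> a\<noteq>0 \<and> sc a (Bcol 1 A j) = s} = na" using nn by simp
    qed
  next
    assume k2: "k < n - 1"
    then have m2: "2 \<le> m" by (simp add: m_def)
    define nb where "nb = hamming_length ?q m"
    have "nb * (?q - 1) = ?q ^ m - 1" unfolding nb_def by (rule hl_mult)
    then have "n * (?q - 1) = (na * nb) * (?q - 1)" using count by (simp add: mult.commute mult.left_commute)
    then have nn: "n = na * nb" using q1 by (metis mult_right_cancel)
    then show "na dvd n" by simp
    have ndiv: "n div na = nb" using nn nap by simp
    have nbp: "0 < nb" using nn kn' by (cases nb) auto
    show "\<exists>m. hamming_length ?q m = n div na \<and> (\<exists>B :: nat \<Rightarrow> nat \<Rightarrow> 'a. hamming_pcm m B)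
            \<and> (\<forall>B. hamming_pcm m B \<longrightarrow> lin_equiv n C (ker_code m n (kron m (n div na) A B)))"
    proof (intro exI[of _ m] conjI allI impI)
      show "hamming_length ?q m = n div na" using ndiv by (simp add: nb_def)
      show "\<exists>B :: nat \<Rightarrow> nat \<Rightarrow> 'a. hamming_pcm m B" using ham_exists[OF m2] by blast
      fix B :: "nat \<Rightarrow> nat \<Rightarrow> 'a" assume H: "hamming_pcm m B"
      let ?K = "kron m (n div na) A B"
      have colK: "Bcol m ?K j = sc c0 (Bcol m B (j mod nb))" if j: "j < n" for j
      proof
        fix i
        have "j div nb < na" using j nn by (simp add: less_mult_imp_div_less)
        then show "Bcol m ?K j i = sc c0 (Bcol m B (j mod nb)) i"
          using c0 ndiv by (cases "i < m") (auto simp: Bcol_def kron_def sc_apply)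
      qed
      show "lin_equiv n C (ker_code m n ?K)"
      proof (rule equiv_main[OF linL ker Cv])
        show "\<And>i. i < n \<Longrightarrow> L (ev i) \<in> vecs m \<and> L (ev i) \<noteq> 0" using Fv by simp
        show "\<And>s. s \<in> vecs m \<Longrightarrow> s \<noteq> 0 \<Longrightarrow> card {(i,a). i<n \<and> a\<noteq>0 \<and> sc a (L (ev i)) = s} = na"
          using cF by simp
        show "Bcol m ?K j \<in> vecs m \<and> Bcol m ?K j \<noteq> 0" if j: "j < n" for j
        proof -
          have "j mod nb < nb" using nbp by simp
          then have "Bcol m B (j mod nb) \<noteq> 0" using ham_nz[OF H] by (simp add: nb_def)
          then show ?thesis using colK[OF j] c0nz Bcol_vecs[of m B "j mod nb"] subspace_vecs
            by (auto intro: V.subspace_scale)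
        qed
        fix s :: "nat \<Rightarrow> 'a" assume s: "s \<in> vecs m" "s \<noteq> 0"
        obtain b0 a0 where b0: "b0 < nb" "a0 \<noteq> 0" "sc a0 (Bcol m B b0) = s"
          using ham_cover[OF H s] by (auto simp: nb_def)
        let ?T = "{(j,a). j<n \<and> a\<noteq>0 \<and> sc a (Bcol m ?K j) = s}"
        have "?T = (\<lambda>t. (t * nb + b0, a0 / c0)) ` {..<na}"
        proof
          show "?T \<subseteq> (\<lambda>t. (t * nb + b0, a0 / c0)) ` {..<na}"
          proof
            fix p assume "p \<in> ?T"
            then obtain j a where p: "p = (j,a)" "j < n" "a \<noteq> 0" "sc a (Bcol m ?K j) = s" by auto
            have "sc (a * c0) (Bcol m B (j mod nb)) = sc a0 (Bcol m B b0)"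
              using p colK[OF p(2)] b0 by (simp add: V.scale_scale)
            moreover have "j mod nb < nb" using nbp by simp
            ultimately have e: "j mod nb = b0 \<and> a * c0 = a0"
              using ham_uniq[OF H, of "j mod nb" b0 "a * c0" a0] b0 p c0nz by (simp add: nb_def)
            have "j = (j div nb) * nb + b0" using e div_mult_mod_eq[of j nb] by simp
            moreover have "j div nb < na" using p nn by (simp add: less_mult_imp_div_less)
            moreover have "a = a0 / c0" using e c0nz by (simp add: field_simps)
            ultimately show "p \<in> (\<lambda>t. (t * nb + b0, a0 / c0)) ` {..<na}" using p by auto
          qed
        next
          show "(\<lambda>t. (t * nb + b0, a0 / c0)) ` {..<na} \<subseteq> ?T"
          proof
            fix p assume "p \<in> (\<lambda>t. (t * nb + b0, a0 / c0)) ` {..<na}"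
            then obtain t where t: "t < na" "p = (t * nb + b0, a0 / c0)" by auto
            have jn: "t * nb + b0 < n"
            proof -
              have "t * nb + b0 < t * nb + nb" using b0 by simp
              also have "\<dots> = (Suc t) * nb" by simp
              also have "\<dots> \<le> na * nb" using t by (intro mult_right_mono) auto
              finally show ?thesis using nn by simp
            qed
            have "(t * nb + b0) mod nb = b0" using b0 by simp
            then have "sc (a0 / c0) (Bcol m ?K (t * nb + b0)) = s"
              using colK[OF jn] b0 c0nz by (simp add: V.scale_scale)
            then show "p \<in> ?T" using t jn b0 c0nz by simp
          qed
        qed
        moreover have "inj_on (\<lambda>t. (t * nb + b0, a0 / c0)) {..<na}"
          using nbp by (auto intro!: inj_onI)
        ultimately show "card ?T = na" by (simp add: card_image)
      qed
    qed
  qed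
qed


end
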